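(* Let $M=(M_{ij})_{1\le i,j\le d}$ be a $d\times d$ real matrix with nonnegative coefficients, acting on row vectors by $x\mapsto xM$. Then $M$ is uniformly positive if and only if for every pair $(i,j)$ with $M_{ij}=0$, either the whole $i$-th row of $M$ is zero or the whole $j$-th column of $M$ is zero.
   Context: Let $C=[0,\infty)^d\setminus\{0\}$ (row vectors), with the coordinatewise order. $M$ is uniformly positive if there exist $A\ge1$ and $h\in C$ such that for every $x\in C$ there is $b(x)\ge0$ with $A^{-1}b(x)h\le xM\le A\,b(x)h$. *)

theory Defs
  imports "HOL-Analysis.Analysis"
begin

definition pos_cone :: "(real ^ 'n) set" where
  "pos_cone = {x. (\<forall>i. 0 \<le> x $ i) \<and> x \<noteq> 0}"

definition uniformly_positive :: "real ^ 'n ^ 'n \<Rightarrow> bool" where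
  "uniformly_positive M \<longleftrightarrow>
     (\<exists>A h. A \<ge> 1 \<and> h \<in> pos_cone \<and>
        (\<forall>x \<in> pos_cone. \<exists>b. b \<ge> 0 \<and>
           (\<forall>j. (1 / A) * b * h $ j \<le> (x v* M) $ j \<and> (x v* M) $ j \<le> A * b * h $ j)))"

end

theory Submission
  imports Defs
begin

lemma vm_axis: "(axis i (1::real) v* M) $ k = M $ i $ k"
proof -
  have "(axis i (1::real) v* M) $ k = (\<Sum>ia\<in>UNIV. (if ia = i then M $ ia $ k else 0))"
    unfolding vector_matrix_mult_def axis_def vec_lambda_beta by (intro sum.cong) auto
  thus ?thesis by simp
qed

lemma axis_cone: "axis i (1::real) \<in> pos_cone"
  unfolding pos_cone_def by (auto simp: axis_def vec_eq_iff)

lemma vm_comp: "(x v* M) $ j = (\<Sum>i\<in>UNIV. x $ i * M $ i $ j)"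
  by (simp add: vector_matrix_mult_def)

lemma forward:
  fixes M :: "real ^ 'n ^ 'n"
  assumes nn: "\<forall>i j. 0 \<le> M $ i $ j" and up: "uniformly_positive M"
  shows "M $ i $ j = 0 \<longrightarrow> (\<forall>k. M $ i $ k = 0) \<or> (\<forall>k. M $ k $ j = 0)"
proof (rule ccontr)
  assume "\<not> ?thesis"
  then obtain k l where z: "M $ i $ j = 0" and k: "M $ i $ k \<noteq> 0" and l: "M $ l $ j \<noteq> 0" by auto
  from up obtain A h where A: "A \<ge> 1" and h: "h \<in> pos_cone" and
    H: "\<forall>x \<in> pos_cone. \<exists>b. b \<ge> 0 \<and>
           (\<forall>j. (1 / A) * b * h $ j \<le> (x v* M) $ j \<and> (x v* M) $ j \<le> A * b * h $ j)"
    unfolding uniformly_positive_def by blast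
  have hj0: "h $ j \<ge> 0" using h by (simp add: pos_cone_def)
  obtain b where b: "b \<ge> 0" and B: "\<forall>j. (1 / A) * b * h $ j \<le> M $ i $ j \<and> M $ i $ j \<le> A * b * h $ j"
    using H axis_cone[of i] by (auto simp: vm_axis)
  have "M $ i $ k > 0" using nn k by (metis less_eq_real_def)
  hence "0 < A * b * h $ k" using B by (meson less_le_trans)
  hence bpos: "b > 0" using b A by (metis mult_eq_0_iff not_less_iff_gr_or_eq order_le_less)
  have "(1/A) * b * h $ j \<le> 0" using B z by metis
  moreover have "(1/A) * b > 0" using A bpos by simp
  ultimately have "h $ j \<le> 0"
    by (metis mult_pos_pos not_le not_less_iff_gr_or_eq)
  hence hj: "h $ j = 0" using hj0 by simp
  obtain b' where B': "\<forall>j. M $ l $ j \<le> A * b' * h $ j"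
    using H[rule_format, OF axis_cone[of l]] unfolding vm_axis by blast
  have "M $ l $ j \<le> 0" using B'[rule_format, of j] hj by simp
  thus False using nn l by (metis antisym)
qed


lemma backward:
  fixes M :: "real ^ 'n ^ 'n"
  assumes nn: "\<forall>i j. 0 \<le> M $ i $ j"
    and C: "\<forall>i j. M $ i $ j = 0 \<longrightarrow> (\<forall>k. M $ i $ k = 0) \<or> (\<forall>k. M $ k $ j = 0)"
  shows "uniformly_positive M"
proof (cases "\<forall>i j. M $ i $ j = 0")
  case True
  have "(1::real) \<ge> 1" by simp
  moreover have "((\<chi> j. (1::real)) :: real^'n) \<in> pos_cone" by (auto simp: pos_cone_def vec_eq_iff)
  moreover have "\<forall>x \<in> pos_cone. \<exists>b::real. b \<ge> 0 \<and>
           (\<forall>j. (1 / 1) * b * ((\<chi> j. (1::real)) :: real^'n) $ j \<le> (x v* M) $ j \<and> (x v* M) $ j \<le> 1 * b * ((\<chi> j. (1::real)) :: real^'n) $ j)"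
    using True by (auto simp: vm_comp intro!: exI[of _ 0])
  ultimately show ?thesis unfolding uniformly_positive_def by blast
next
  case False
  then obtain i0 j0 where ij0: "M $ i0 $ j0 \<noteq> 0" by auto
  define P where "P = {M $ i $ j | i j. M $ i $ j > 0}"
  have finP: "finite P"
  proof -
    have "P \<subseteq> (\<lambda>(i,j). M $ i $ j) ` UNIV" unfolding P_def by auto
    thus ?thesis by (rule finite_subset) simp
  qed
  have P0: "M $ i0 $ j0 \<in> P" unfolding P_def using ij0 nn by (auto simp: less_le)
  define m where "m = Min P"
  have mpos: "m > 0" unfolding m_def using finP P0 by (subst Min_gr_iff) (auto simp: P_def)
  have mle: "\<And>i j. M $ i $ j > 0 \<Longrightarrow> m \<le> M $ i $ j"
    unfolding m_def using finP by (intro Min_le) (auto simp: P_def)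
  define Mx where "Mx = (\<Sum>i\<in>UNIV. \<Sum>j\<in>UNIV. M $ i $ j)"
  have Mxge: "\<And>i j. M $ i $ j \<le> Mx"
  proof -
    fix i j
    have "M $ i $ j \<le> (\<Sum>j\<in>UNIV. M $ i $ j)"
      by (rule member_le_sum) (use nn in auto)
    also have "\<dots> \<le> Mx" unfolding Mx_def
      by (rule member_le_sum) (use nn in \<open>auto intro: sum_nonneg\<close>)
    finally show "M $ i $ j \<le> Mx" .
  qed
  define A where "A = max 1 (max Mx (1/m))"
  have A1: "A \<ge> 1" and AMx: "Mx \<le> A" and Am': "1 / m \<le> A"
    unfolding A_def by auto
  have "1 \<le> A * m" using Am' mpos by (simp add: field_simps)
  hence Am: "1 / A \<le> m" using A1 by (simp add: field_simps)
  define r where "r = (\<lambda>i. if \<exists>k. M $ i $ k \<noteq> 0 then 1 else (0::real))"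
  define h where "h = (\<chi> j. if \<exists>k. M $ k $ j \<noteq> 0 then 1 else (0::real))"
  have h: "h \<in> pos_cone"
  proof -
    have "h $ j0 = 1" unfolding h_def using ij0 by auto
    hence "h \<noteq> 0" by auto
    moreover have "\<forall>i. 0 \<le> h $ i" by (simp add: h_def)
    ultimately show ?thesis unfolding pos_cone_def by blast
  qed
  have "\<forall>x \<in> pos_cone. \<exists>b::real. b \<ge> 0 \<and>
           (\<forall>j. (1 / A) * b * h $ j \<le> (x v* M) $ j \<and> (x v* M) $ j \<le> A * b * h $ j)"
  proof
    fix x :: "real ^ 'n" assume "x \<in> pos_cone"
    hence x0: "\<And>i. x $ i \<ge> 0" by (simp add: pos_cone_def)
    define b where "b = (\<Sum>i\<in>UNIV. x $ i * r i)"
    have b0: "b \<ge> 0" unfolding b_def r_def using x0 by (auto intro: sum_nonneg)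
    have "(1 / A) * b * h $ j \<le> (x v* M) $ j \<and> (x v* M) $ j \<le> A * b * h $ j" for j
    proof (cases "\<exists>k. M $ k $ j \<noteq> 0")
      case False
      hence "(x v* M) $ j = 0" by (simp add: vm_comp)
      moreover have "h $ j = 0" using False by (simp add: h_def)
      ultimately show ?thesis by simp
    next
      case True
      hence hj: "h $ j = 1" by (simp add: h_def)
      have lo: "m * (x $ i * r i) \<le> x $ i * M $ i $ j" and hi: "x $ i * M $ i $ j \<le> Mx * (x $ i * r i)" for i
      proof -
        show "m * (x $ i * r i) \<le> x $ i * M $ i $ j"
        proof (cases "\<exists>k. M $ i $ k \<noteq> 0")
          case True2: True
          hence "M $ i $ j \<noteq> 0" using C True by blast
          hence "M $ i $ j > 0" using nn by (simp add: less_le)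
          hence "m \<le> M $ i $ j" by (rule mle)
          thus ?thesis using True2 x0[of i] by (simp add: r_def mult.commute[of m] mult_left_mono)
        qed (simp add: r_def)
        show "x $ i * M $ i $ j \<le> Mx * (x $ i * r i)"
        proof (cases "\<exists>k. M $ i $ k \<noteq> 0")
          case True2: True
          thus ?thesis using Mxge[of i j] x0[of i] by (simp add: r_def mult.commute[of Mx] mult_left_mono)
        qed (simp add: r_def)
      qed
      have "m * b \<le> (x v* M) $ j" unfolding b_def vm_comp sum_distrib_left
        by (rule sum_mono) (rule lo)
      moreover have "(x v* M) $ j \<le> Mx * b" unfolding b_def vm_comp sum_distrib_left
        by (rule sum_mono) (rule hi)
      moreover have "(1/A) * b \<le> m * b" using Am b0 by (rule mult_right_mono)
      moreover have "Mx * b \<le> A * b" using AMx b0 by (rule mult_right_mono)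
      ultimately show ?thesis using hj by simp
    qed
    thus "\<exists>b::real. b \<ge> 0 \<and>
           (\<forall>j. (1 / A) * b * h $ j \<le> (x v* M) $ j \<and> (x v* M) $ j \<le> A * b * h $ j)"
      using b0 by blast
  qed
  thus ?thesis unfolding uniformly_positive_def using A1 h by blast
qed

theorem mainTheorem7:
  fixes M :: "real ^ 'n ^ 'n"
  assumes "\<forall>i j. 0 \<le> M $ i $ j"
  shows "uniformly_positive M \<longleftrightarrow>
    (\<forall>i j. M $ i $ j = 0 \<longrightarrow> (\<forall>k. M $ i $ k = 0) \<or> (\<forall>k. M $ k $ j = 0))"
  using forward[OF assms] backward[OF assms] by blast

end
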